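(* Let $V\subseteq\{0,1\}^n$ and $\preceq$ a term order on $\mathbb{R}[x_1,\dots,x_n]$. Then $\mathcal{S}_\preceq(V)=\mathcal{S}_\preceq(T_i(V))$ for every $i=1,\dots,n$.
   Context: $T_i$ is the reflection in the hyperplane $\{x_i=\tfrac12\}$, mapping $v\in\{0,1\}^n$ to $(v_1,\dots,v_{i-1},1-v_i,v_{i+1},\dots,v_n)$. $\mathcal{S}_\preceq(V)=\{\tau\subseteq[n]:\prod_{j\in\tau}x_j\notin\mathrm{in}_\preceq(I(V))\}$, where $I(V)$ is the vanishing ideal of $V$ and $\mathrm{in}_\preceq$ the initial ideal. *)

theory Defs
  imports Complex_Main "HOL-Library.Poly_Mapping"
begin

text \<open>Variable x_(j+1) of the paper is index j here (0-based).\<close>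

type_synonym mon = "nat \<Rightarrow>\<^sub>0 nat"
type_synonym rpoly = "mon \<Rightarrow>\<^sub>0 real"

definition mons :: "nat \<Rightarrow> mon set" where
  "mons n = {m. \<forall>j \<in> Poly_Mapping.keys m. j < n}"

definition polys :: "nat \<Rightarrow> rpoly set" where
  "polys n = {p. Poly_Mapping.keys p \<subseteq> mons n}"

definition cube :: "nat \<Rightarrow> (nat \<Rightarrow> real) set" where
  "cube n = {v. (\<forall>j<n. v j \<in> {0, 1}) \<and> (\<forall>j\<ge>n. v j = 0)}"

definition refl_T :: "nat \<Rightarrow> (nat \<Rightarrow> real) \<Rightarrow> (nat \<Rightarrow> real)" where
  "refl_T i v = v(i := 1 - v i)"

definition eval_mon :: "mon \<Rightarrow> (nat \<Rightarrow> real) \<Rightarrow> real" where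
  "eval_mon m v = (\<Prod>j \<in> Poly_Mapping.keys m. v j ^ Poly_Mapping.lookup m j)"

definition eval_poly :: "rpoly \<Rightarrow> (nat \<Rightarrow> real) \<Rightarrow> real" where
  "eval_poly p v = (\<Sum>m \<in> Poly_Mapping.keys p. Poly_Mapping.lookup p m * eval_mon m v)"

definition vanishing_ideal :: "nat \<Rightarrow> (nat \<Rightarrow> real) set \<Rightarrow> rpoly set" where
  "vanishing_ideal n V = {p \<in> polys n. \<forall>v \<in> V. eval_poly p v = 0}"

definition term_order :: "nat \<Rightarrow> (mon \<Rightarrow> mon \<Rightarrow> bool) \<Rightarrow> bool" where
  "term_order n le \<longleftrightarrow>
     (\<forall>a \<in> mons n. le a a) \<and>
     (\<forall>a \<in> mons n. \<forall>b \<in> mons n. le a b \<and> le b a \<longrightarrow> a = b) \<and>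
     (\<forall>a \<in> mons n. \<forall>b \<in> mons n. \<forall>c \<in> mons n. le a b \<and> le b c \<longrightarrow> le a c) \<and>
     (\<forall>a \<in> mons n. \<forall>b \<in> mons n. le a b \<or> le b a) \<and>
     (\<forall>a \<in> mons n. le 0 a) \<and>
     (\<forall>a \<in> mons n. \<forall>b \<in> mons n. \<forall>c \<in> mons n. le a b \<longrightarrow> le (a + c) (b + c))"

definition lead_mon :: "(mon \<Rightarrow> mon \<Rightarrow> bool) \<Rightarrow> rpoly \<Rightarrow> mon" where
  "lead_mon le p = (THE m. m \<in> Poly_Mapping.keys p \<and> (\<forall>m' \<in> Poly_Mapping.keys p. le m' m))"

inductive_set ideal_gen :: "nat \<Rightarrow> rpoly set \<Rightarrow> rpoly set" for n G where
  zero: "0 \<in> ideal_gen n G"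
| gen: "g \<in> G \<Longrightarrow> g \<in> ideal_gen n G"
| add: "p \<in> ideal_gen n G \<Longrightarrow> q \<in> ideal_gen n G \<Longrightarrow> p + q \<in> ideal_gen n G"
| mult: "q \<in> polys n \<Longrightarrow> p \<in> ideal_gen n G \<Longrightarrow> q * p \<in> ideal_gen n G"

definition initial_ideal :: "nat \<Rightarrow> (mon \<Rightarrow> mon \<Rightarrow> bool) \<Rightarrow> rpoly set \<Rightarrow> rpoly set" where
  "initial_ideal n le I =
     ideal_gen n {Poly_Mapping.single (lead_mon le p) 1 | p. p \<in> I \<and> p \<noteq> 0}"

definition sqfree_mon :: "nat set \<Rightarrow> rpoly" where
  "sqfree_mon \<tau> = Poly_Mapping.single (\<Sum>j \<in> \<tau>. Poly_Mapping.single j (1::nat)) 1"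

definition S_set :: "nat \<Rightarrow> (mon \<Rightarrow> mon \<Rightarrow> bool) \<Rightarrow> (nat \<Rightarrow> real) set \<Rightarrow> nat set set" where
  "S_set n le V = {\<tau>. \<tau> \<subseteq> {..<n} \<and>
      sqfree_mon \<tau> \<notin> initial_ideal n le (vanishing_ideal n V)}"

end

theory Submission
  imports Defs
begin

definition upd :: "mon \<Rightarrow> nat \<Rightarrow> nat \<Rightarrow> mon" where
  "upd M i j = Poly_Mapping.update i j M"

lemma lookup_upd: "Poly_Mapping.lookup (upd M i j) k = (if k = i then j else Poly_Mapping.lookup M k)"
  unfolding upd_def by (auto simp: lookup_update)

lemma keys_upd: "Poly_Mapping.keys (upd M i j) \<subseteq> insert i (Poly_Mapping.keys M)"
  unfolding upd_def by (auto simp: keys_update)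

lemma keys_upd_diff: "Poly_Mapping.keys (upd M i j) - {i} = Poly_Mapping.keys M - {i}"
  unfolding upd_def by (auto simp: keys_update)

lemma eval_mon_split:
  "eval_mon M w = w i ^ Poly_Mapping.lookup M i *
     (\<Prod>j \<in> Poly_Mapping.keys M - {i}. w j ^ Poly_Mapping.lookup M j)"
proof (cases "i \<in> Poly_Mapping.keys M")
  case True
  then show ?thesis unfolding eval_mon_def by (simp add: prod.remove)
next
  case False
  then have "Poly_Mapping.lookup M i = 0" by (simp add: in_keys_iff)
  then show ?thesis using False unfolding eval_mon_def by simp
qed

definition base :: "mon \<Rightarrow> nat \<Rightarrow> mon" where "base M i = upd M i 0"

lemma eval_mon_upd:
  "eval_mon (upd M i j) v = v i ^ j * eval_mon (base M i) v"
  unfolding base_def using eval_mon_split[of "upd M i j" v i] eval_mon_split[of "upd M i 0" v i]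
  by (simp add: keys_upd_diff lookup_upd)

lemma eval_mon_refl:
  "eval_mon M (refl_T i v) = (1 - v i) ^ Poly_Mapping.lookup M i * eval_mon (base M i) v"
proof -
  have "(\<Prod>j \<in> Poly_Mapping.keys M - {i}. refl_T i v j ^ Poly_Mapping.lookup M j)
      = (\<Prod>j \<in> Poly_Mapping.keys M - {i}. v j ^ Poly_Mapping.lookup M j)"
    by (rule prod.cong) (auto simp: refl_T_def)
  then show ?thesis
    using eval_mon_split[of M "refl_T i v" i] eval_mon_split[of "upd M i 0" v i]
    by (simp add: keys_upd_diff lookup_upd refl_T_def base_def)
qed

lemma eval_poly_gen:
  assumes "finite S" "Poly_Mapping.keys p \<subseteq> S"
  shows "eval_poly p v = (\<Sum>m\<in>S. Poly_Mapping.lookup p m * eval_mon m v)"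
  unfolding eval_poly_def
  by (rule sum.mono_neutral_left) (use assms in \<open>auto simp: in_keys_iff\<close>)

lemma eval_poly_add: "eval_poly (p + q) v = eval_poly p v + eval_poly q v"
proof -
  let ?S = "Poly_Mapping.keys p \<union> Poly_Mapping.keys q"
  have "eval_poly (p + q) v = (\<Sum>m\<in>?S. Poly_Mapping.lookup (p+q) m * eval_mon m v)"
    by (rule eval_poly_gen) (auto dest: keys_add[THEN subsetD])
  also have "\<dots> = (\<Sum>m\<in>?S. Poly_Mapping.lookup p m * eval_mon m v) + (\<Sum>m\<in>?S. Poly_Mapping.lookup q m * eval_mon m v)"
    by (simp add: lookup_add distrib_right sum.distrib)
  also have "\<dots> = eval_poly p v + eval_poly q v"
    by (subst (1 2) eval_poly_gen[of ?S]) auto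
  finally show ?thesis .
qed

lemma eval_poly_zero: "eval_poly 0 v = 0"
  unfolding eval_poly_def by simp

lemma eval_poly_sum: "finite A \<Longrightarrow> eval_poly (\<Sum>a\<in>A. f a) v = (\<Sum>a\<in>A. eval_poly (f a) v)"
  by (induction A rule: finite_induct) (auto simp: eval_poly_zero eval_poly_add)

lemma eval_poly_single: "eval_poly (Poly_Mapping.single m c) v = c * eval_mon m v"
  by (subst eval_poly_gen[of "{m}"]) auto

definition phi :: "nat \<Rightarrow> rpoly \<Rightarrow> rpoly" where
  "phi i f = (\<Sum>M\<in>Poly_Mapping.keys f. \<Sum>j\<in>{..Poly_Mapping.lookup M i}.
      Poly_Mapping.single (upd M i j)
        (Poly_Mapping.lookup f M * (-1)^j * of_nat (Poly_Mapping.lookup M i choose j)))"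

lemma eval_phi: "eval_poly (phi i f) v = eval_poly f (refl_T i v)"
proof -
  have "eval_poly (phi i f) v = (\<Sum>M\<in>Poly_Mapping.keys f. \<Sum>j\<in>{..Poly_Mapping.lookup M i}.
      Poly_Mapping.lookup f M * (-1)^j * of_nat (Poly_Mapping.lookup M i choose j) * (v i ^ j * eval_mon (base M i) v))"
    unfolding phi_def
    by (simp only: eval_poly_sum finite_keys finite_atMost eval_poly_single eval_mon_upd)
  also have "\<dots> = (\<Sum>M\<in>Poly_Mapping.keys f. Poly_Mapping.lookup f M * eval_mon (base M i) v *
      (\<Sum>j\<in>{..Poly_Mapping.lookup M i}. of_nat (Poly_Mapping.lookup M i choose j) * (- v i)^j * 1 ^ (Poly_Mapping.lookup M i - j)))"
    proof (intro sum.cong refl)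
    fix M
    show "(\<Sum>j\<in>{..Poly_Mapping.lookup M i}.
      Poly_Mapping.lookup f M * (-1)^j * of_nat (Poly_Mapping.lookup M i choose j) * (v i ^ j * eval_mon (base M i) v))
      = Poly_Mapping.lookup f M * eval_mon (base M i) v *
      (\<Sum>j\<in>{..Poly_Mapping.lookup M i}. of_nat (Poly_Mapping.lookup M i choose j) * (- v i)^j * 1 ^ (Poly_Mapping.lookup M i - j))"
      unfolding sum_distrib_left
      proof (intro sum.cong refl)
        fix j
        have pm: "(- v i)^j = (-1)^j * v i ^ j" by (metis power_minus)
        show "Poly_Mapping.lookup f M * (-1)^j * of_nat (Poly_Mapping.lookup M i choose j) * (v i ^ j * eval_mon (base M i) v) =
          Poly_Mapping.lookup f M * eval_mon (base M i) v * (of_nat (Poly_Mapping.lookup M i choose j) * (- v i)^j * 1 ^ (Poly_Mapping.lookup M i - j))"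
          unfolding pm power_one mult_1_right by (simp only: mult_ac)
      qed
  qed
  also have "\<dots> = (\<Sum>M\<in>Poly_Mapping.keys f. Poly_Mapping.lookup f M * eval_mon (base M i) v *
      (- v i + 1) ^ Poly_Mapping.lookup M i)"
    by (simp only: binomial_ring)
  also have "\<dots> = eval_poly f (refl_T i v)"
    unfolding eval_poly_def by (intro sum.cong refl) (simp add: eval_mon_refl)
  finally show ?thesis .
qed


lemma mons_upd: "M \<in> mons n \<Longrightarrow> i < n \<Longrightarrow> upd M i j \<in> mons n"
  unfolding mons_def using keys_upd[of M i j] by auto

lemma mons_single: "i < n \<Longrightarrow> Poly_Mapping.single i k \<in> mons n"
  unfolding mons_def by auto

lemma upd_self: "upd M i (Poly_Mapping.lookup M i) = M"
  by (rule poly_mapping_eqI) (simp add: lookup_upd)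

lemma upd_divides: "j \<le> Poly_Mapping.lookup M i \<Longrightarrow>
   M = upd M i j + Poly_Mapping.single i (Poly_Mapping.lookup M i - j)"
  by (rule poly_mapping_eqI) (auto simp: lookup_upd lookup_add lookup_single when_def)

lemma to_antisym0: "term_order n le \<Longrightarrow> \<forall>a \<in> mons n. \<forall>b \<in> mons n. le a b \<and> le b a \<longrightarrow> a = b"
  unfolding term_order_def by (elim conjE) assumption
lemma to_trans0: "term_order n le \<Longrightarrow> \<forall>a \<in> mons n. \<forall>b \<in> mons n. \<forall>c \<in> mons n. le a b \<and> le b c \<longrightarrow> le a c"
  unfolding term_order_def by (elim conjE) assumption
lemma to_total0: "term_order n le \<Longrightarrow> \<forall>a \<in> mons n. \<forall>b \<in> mons n. le a b \<or> le b a"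
  unfolding term_order_def by (elim conjE) assumption
lemma to_refl0: "term_order n le \<Longrightarrow> \<forall>a \<in> mons n. le a a"
  unfolding term_order_def by (elim conjE) assumption
lemma to_zero0: "term_order n le \<Longrightarrow> \<forall>a \<in> mons n. le 0 a"
  unfolding term_order_def by (elim conjE) assumption
lemma to_mono0: "term_order n le \<Longrightarrow> \<forall>a \<in> mons n. \<forall>b \<in> mons n. \<forall>c \<in> mons n. le a b \<longrightarrow> le (a + c) (b + c)"
  unfolding term_order_def by (elim conjE) assumption

lemma to_antisym: "term_order n le \<Longrightarrow> a \<in> mons n \<Longrightarrow> b \<in> mons n \<Longrightarrow> le a b \<Longrightarrow> le b a \<Longrightarrow> a = b"
  using to_antisym0 by blast

lemma to_trans: "term_order n le \<Longrightarrow> a \<in> mons n \<Longrightarrow> b \<in> mons n \<Longrightarrow> c \<in> mons n \<Longrightarrow> le a b \<Longrightarrow> le b c \<Longrightarrow> le a c"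
  using to_trans0 by blast

lemma to_total: "term_order n le \<Longrightarrow> a \<in> mons n \<Longrightarrow> b \<in> mons n \<Longrightarrow> \<not> le a b \<Longrightarrow> le b a"
  using to_total0 by blast

lemma to_refl: "term_order n le \<Longrightarrow> a \<in> mons n \<Longrightarrow> le a a"
  using to_refl0 by blast

lemma to_le_add:
  assumes "term_order n le" "a \<in> mons n" "d \<in> mons n"
  shows "le a (a + d)"
proof -
  have "le 0 d" using assms to_zero0 by blast
  moreover have "0 \<in> mons n" unfolding mons_def by simp
  ultimately have "le (0 + a) (d + a)" using assms to_mono0[OF assms(1)] by blast
  then show ?thesis by (simp add: add.commute)
qed

lemma le_upd:
  assumes "term_order n le" "M \<in> mons n" "i < n" "j \<le> Poly_Mapping.lookup M i"
  shows "le (upd M i j) M"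
proof -
  have "le (upd M i j) (upd M i j + Poly_Mapping.single i (Poly_Mapping.lookup M i - j))"
    by (rule to_le_add[OF assms(1) mons_upd[OF assms(2,3)] mons_single[OF assms(3)]])
  then show ?thesis using upd_divides[OF assms(4)] by simp
qed

lemma keys_phi:
  assumes "x \<in> Poly_Mapping.keys (phi i f)"
  shows "\<exists>M\<in>Poly_Mapping.keys f. \<exists>j\<le>Poly_Mapping.lookup M i. x = upd M i j"
proof -
  define h where "h M j = Poly_Mapping.single (upd M i j)
        (Poly_Mapping.lookup f M * (-1)^j * of_nat (Poly_Mapping.lookup M i choose j) :: real)" for M j
  have "x \<in> Poly_Mapping.keys (\<Sum>M\<in>Poly_Mapping.keys f. \<Sum>j\<in>{..Poly_Mapping.lookup M i}. h M j)"
    using assms unfolding phi_def h_def .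
  then have "x \<in> (\<Union>M\<in>Poly_Mapping.keys f. Poly_Mapping.keys (\<Sum>j\<in>{..Poly_Mapping.lookup M i}. h M j))"
    by (rule subsetD[OF keys_sum])
  then obtain M where M: "M \<in> Poly_Mapping.keys f"
    and x1: "x \<in> Poly_Mapping.keys (\<Sum>j\<in>{..Poly_Mapping.lookup M i}. h M j)" by blast
  from x1 have "x \<in> (\<Union>j\<in>{..Poly_Mapping.lookup M i}. Poly_Mapping.keys (h M j))"
    by (rule subsetD[OF keys_sum])
  then obtain j where j: "j \<le> Poly_Mapping.lookup M i" and "x \<in> Poly_Mapping.keys (h M j)" by blast
  then have "x = upd M i j" unfolding h_def by (simp split: if_splits)
  then show ?thesis using M j by blast
qed

lemma lookup_phi_lead:
  assumes to: "term_order n le" and fp: "f \<in> polys n" and i: "i < n"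
    and L: "L \<in> Poly_Mapping.keys f" and Lmax: "\<forall>m\<in>Poly_Mapping.keys f. le m L"
  shows "Poly_Mapping.lookup (phi i f) L = Poly_Mapping.lookup f L * (-1)^(Poly_Mapping.lookup L i)"
proof -
  have km: "Poly_Mapping.keys f \<subseteq> mons n" using fp unfolding polys_def by simp
  define c where "c M j = Poly_Mapping.lookup f M * (-1)^j * (of_nat (Poly_Mapping.lookup M i choose j) :: real)" for M j
  have "Poly_Mapping.lookup (phi i f) L = (\<Sum>M\<in>Poly_Mapping.keys f. \<Sum>j\<in>{..Poly_Mapping.lookup M i}.
      (c M j when upd M i j = L))"
    unfolding phi_def c_def by (simp add: lookup_sum lookup_single)
  also have "\<dots> = (\<Sum>j\<in>{..Poly_Mapping.lookup L i}. (c L j when upd L i j = L))"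
  proof (rule sum.remove[OF finite_keys L, THEN trans])
    have "(\<Sum>M\<in>Poly_Mapping.keys f - {L}. \<Sum>j\<in>{..Poly_Mapping.lookup M i}. (c M j when upd M i j = L)) = 0"
    proof (rule sum.neutral, rule ballI)
      fix M assume M: "M \<in> Poly_Mapping.keys f - {L}"
      have "upd M i j \<noteq> L" if "j \<le> Poly_Mapping.lookup M i" for j
      proof
        assume eq: "upd M i j = L"
        have "le L M" using le_upd[OF to _ i that] M km eq by auto
        moreover have "le M L" using Lmax M by auto
        ultimately have "M = L" using to_antisym[OF to] M km L by blast
        then show False using M by simp
      qed
      then show "(\<Sum>j\<in>{..Poly_Mapping.lookup M i}. (c M j when upd M i j = L)) = 0"
        by (intro sum.neutral) auto
    qed
    then show "(\<Sum>j\<in>{..Poly_Mapping.lookup L i}. (c L j when upd L i j = L)) +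
      (\<Sum>M\<in>Poly_Mapping.keys f - {L}. \<Sum>j\<in>{..Poly_Mapping.lookup M i}. (c M j when upd M i j = L))
      = (\<Sum>j\<in>{..Poly_Mapping.lookup L i}. (c L j when upd L i j = L))" by simp
  qed
  also have "\<dots> = c L (Poly_Mapping.lookup L i)"
  proof (rule sum.remove[of _ "Poly_Mapping.lookup L i", THEN trans])
    have "(\<Sum>j\<in>{..Poly_Mapping.lookup L i} - {Poly_Mapping.lookup L i}. (c L j when upd L i j = L)) = 0"
    proof (intro sum.neutral ballI)
      fix j assume "j \<in> {..Poly_Mapping.lookup L i} - {Poly_Mapping.lookup L i}"
      then have "upd L i j \<noteq> L"
        by (metis DiffD2 insertI1 lookup_upd)
      then show "(c L j when upd L i j = L) = 0" by simp
    qed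
    then show "(c L (Poly_Mapping.lookup L i) when upd L i (Poly_Mapping.lookup L i) = L) +
      (\<Sum>j\<in>{..Poly_Mapping.lookup L i} - {Poly_Mapping.lookup L i}. (c L j when upd L i j = L))
      = c L (Poly_Mapping.lookup L i)" by (simp add: upd_self)
  qed auto
  finally show ?thesis unfolding c_def by simp
qed

lemma lead_exists:
  assumes to: "term_order n le" and "finite K" "K \<noteq> {}" "K \<subseteq> mons n"
  shows "\<exists>L\<in>K. \<forall>m\<in>K. le m L"
  using assms(2-4)
proof (induction K rule: finite_ne_induct)
  case (singleton x)
  then show ?case using to_refl[OF to] by auto
next
  case (insert x F)
  then obtain L where L: "L \<in> F" "\<forall>m\<in>F. le m L" by auto
  have xm: "x \<in> mons n" and Lm: "L \<in> mons n" using insert L by auto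
  show ?case
  proof (cases "le x L")
    case True
    then show ?thesis using L by auto
  next
    case False
    then have "le L x" using to_total[OF to xm Lm] by blast
    then have "\<forall>m\<in>insert x F. le m x"
      using L insert to_trans[OF to _ Lm xm] to_refl[OF to xm] by blast
    then show ?thesis by auto
  qed
qed

lemma lead_mon_eq:
  assumes to: "term_order n le" and "Poly_Mapping.keys p \<subseteq> mons n"
    and "L \<in> Poly_Mapping.keys p" "\<forall>m\<in>Poly_Mapping.keys p. le m L"
  shows "lead_mon le p = L"
  unfolding lead_mon_def
proof (rule the_equality)
  show "L \<in> Poly_Mapping.keys p \<and> (\<forall>m'\<in>Poly_Mapping.keys p. le m' L)" using assms by blast
next
  fix m assume "m \<in> Poly_Mapping.keys p \<and> (\<forall>m'\<in>Poly_Mapping.keys p. le m' m)"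
  then show "m = L" using assms to_antisym[OF to, of m L] by blast
qed

lemma phi_polys: "f \<in> polys n \<Longrightarrow> i < n \<Longrightarrow> phi i f \<in> polys n"
  unfolding polys_def using keys_phi mons_upd by fastforce

lemma refl_T_twice: "refl_T i (refl_T i v) = v"
  unfolding refl_T_def by auto

lemma gens_subset:
  assumes to: "term_order n le" and i: "i < n"
  shows "{Poly_Mapping.single (lead_mon le p) 1 | p. p \<in> vanishing_ideal n V \<and> p \<noteq> 0}
    \<subseteq> {Poly_Mapping.single (lead_mon le p) 1 | p. p \<in> vanishing_ideal n (refl_T i ` V) \<and> p \<noteq> 0}"
proof
  fix g assume "g \<in> {Poly_Mapping.single (lead_mon le p) 1 | p. p \<in> vanishing_ideal n V \<and> p \<noteq> 0}"
  then obtain f where g: "g = Poly_Mapping.single (lead_mon le f) 1" and fI: "f \<in> vanishing_ideal n V"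
    and f0: "f \<noteq> 0" by blast
  have fp: "f \<in> polys n" using fI unfolding vanishing_ideal_def by simp
  have km: "Poly_Mapping.keys f \<subseteq> mons n" using fp unfolding polys_def by simp
  obtain L where L: "L \<in> Poly_Mapping.keys f" "\<forall>m\<in>Poly_Mapping.keys f. le m L"
    using lead_exists[OF to finite_keys _ km] f0 by auto
  have lf: "lead_mon le f = L" using lead_mon_eq[OF to km L] .
  have lk: "Poly_Mapping.lookup (phi i f) L \<noteq> 0"
    using lookup_phi_lead[OF to fp i L] L(1) by (simp add: in_keys_iff)
  have pp: "phi i f \<in> polys n" using phi_polys[OF fp i] .
  have kp: "Poly_Mapping.keys (phi i f) \<subseteq> mons n" using pp unfolding polys_def by simp
  have Lk: "L \<in> Poly_Mapping.keys (phi i f)" using lk by (simp add: in_keys_iff)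
  have max: "\<forall>m\<in>Poly_Mapping.keys (phi i f). le m L"
  proof
    fix x assume "x \<in> Poly_Mapping.keys (phi i f)"
    then obtain M j where M: "M \<in> Poly_Mapping.keys f" "j \<le> Poly_Mapping.lookup M i" "x = upd M i j"
      using keys_phi by blast
    have Mm: "M \<in> mons n" using M km by auto
    have xm: "x \<in> mons n" using mons_upd[OF Mm i] M(3) by simp
    have Lm: "L \<in> mons n" using L km by auto
    have "le x M" using le_upd[OF to Mm i M(2)] M(3) by simp
    moreover have "le M L" using L M by auto
    ultimately show "le x L" by (rule to_trans[OF to xm Mm Lm])
  qed
  have lp: "lead_mon le (phi i f) = L" using lead_mon_eq[OF to kp Lk max] .
  have van: "\<forall>v\<in>V. eval_poly f v = 0" using fI unfolding vanishing_ideal_def by simp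
  have "\<forall>w\<in>refl_T i ` V. eval_poly (phi i f) w = 0"
  proof
    fix w assume "w \<in> refl_T i ` V"
    then obtain v where v: "v \<in> V" "w = refl_T i v" by blast
    have "eval_poly (phi i f) w = eval_poly f v" unfolding v(2) eval_phi refl_T_twice ..
    then show "eval_poly (phi i f) w = 0" using van v(1) by simp
  qed
  then have PI: "phi i f \<in> vanishing_ideal n (refl_T i ` V)"
    unfolding vanishing_ideal_def using pp by blast
  have P0: "phi i f \<noteq> 0" using lk by (metis lookup_zero)
  have "g = Poly_Mapping.single (lead_mon le (phi i f)) 1" unfolding g lf lp ..
  then show "g \<in> {Poly_Mapping.single (lead_mon le p) 1 | p. p \<in> vanishing_ideal n (refl_T i ` V) \<and> p \<noteq> 0}"
    using PI P0 by blast
qed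

theorem lemma2p7:
  fixes n :: nat and V :: "(nat \<Rightarrow> real) set" and le :: "mon \<Rightarrow> mon \<Rightarrow> bool"
  assumes "V \<subseteq> cube n"
    and "term_order n le"
  shows "\<forall>i < n. S_set n le V = S_set n le (refl_T i ` V)"
proof (intro allI impI)
  fix i assume i: "i < n"
  have VV: "refl_T i ` refl_T i ` V = V"
    by (simp add: image_image refl_T_twice)
  have G: "{Poly_Mapping.single (lead_mon le p) 1 | p. p \<in> vanishing_ideal n V \<and> p \<noteq> 0}
    = {Poly_Mapping.single (lead_mon le p) 1 | p. p \<in> vanishing_ideal n (refl_T i ` V) \<and> p \<noteq> 0}"
    using gens_subset[OF assms(2) i, of V] gens_subset[OF assms(2) i, of "refl_T i ` V"]
    unfolding VV by (rule subset_antisym)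
  show "S_set n le V = S_set n le (refl_T i ` V)"
    by (simp only: S_set_def initial_ideal_def G)
qed

end
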